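(* Let $(X,\mathsf{d}_X)$ be a compact metric space, $\mathfrak{A}$ a finite-dimensional C*-algebra, and $\mu$ a state of $C(X,\mathfrak{A})$. Let $\|\cdot\|_{\mathsf{n}}$ and $\|\cdot\|_{\mathsf{m}}$ be norms on $\mathfrak{A}$ (over $\mathbb{R}$ or $\mathbb{C}$) and $q,p\in\{C(X),\mathbb{C},\mu\}$. Then the seminorms $\mathsf{L}^{(\mathsf{n}),q}_{\mathsf{d}_X}$ and $\mathsf{L}^{(\mathsf{m}),p}_{\mathsf{d}_X}$ are equivalent on the self-adjoint part of $C(X,\mathfrak{A})$, i.e. there exist $c,C>0$ with $c\,\mathsf{L}^{(\mathsf{n}),q}_{\mathsf{d}_X}(a)\le\mathsf{L}^{(\mathsf{m}),p}_{\mathsf{d}_X}(a)\le C\,\mathsf{L}^{(\mathsf{n}),q}_{\mathsf{d}_X}(a)$ for all self-adjoint $a$. Furthermore, the map $\mathfrak{c}_X:C(X)\to C(X,\mathbb{C}1_{\mathfrak{A}})$, $\mathfrak{c}_X(f)(x)=f(x)1_{\mathfrak{A}}$, is bi-Lipschitz with respect to $\mathsf{L}_{\mathsf{d}_X}$ and any $\mathsf{L}^{(\mathsf{n}),q}_{\mathsf{d}_X}$: there exist $c',C'>0$ with $c'\mathsf{L}_{\mathsf{d}_X}(f)\le\mathsf{L}^{(\mathsf{n}),q}_{\mathsf{d}_X}(\mathfrak{c}_X(f))\le C'\mathsf{L}_{\mathsf{d}_X}(f)$ for all real-valued $f\in C(X)$.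
   Context: $C(X,\mathfrak{A})$: continuous $\mathfrak{A}$-valued functions, pointwise operations, supremum norm; $C(X,\mathbb{C}1_{\mathfrak{A}})$ the $\mathbb{C}1_{\mathfrak{A}}$-valued ones. For a norm $\|\cdot\|_{\mathsf{n}}$ on $\mathfrak{A}$: $l^{(\mathsf{n})}_{\mathsf{d}_X}(a)=\sup_{x\ne y}\|a(x)-a(y)\|_{\mathsf{n}}/\mathsf{d}_X(x,y)$; $\mathsf{L}^{(\mathsf{n}),C(X)}_{\mathsf{d}_X}(a)=\max\{l^{(\mathsf{n})}_{\mathsf{d}_X}(a),\inf_{b\in C(X,\mathbb{C}1_{\mathfrak{A}})}\|a-b\|\}$, $\mathsf{L}^{(\mathsf{n}),\mathbb{C}}_{\mathsf{d}_X}(a)=\max\{l^{(\mathsf{n})}_{\mathsf{d}_X}(a),\inf_{\lambda\in\mathbb{C}}\|a-\lambda1\|\}$, $\mathsf{L}^{(\mathsf{n}),\mu}_{\mathsf{d}_X}(a)=\max\{l^{(\mathsf{n})}_{\mathsf{d}_X}(a),\|a-\mu(a)1\|\}$ (supremum norms). $\mathsf{L}_{\mathsf{d}_X}(f)=\sup_{x\ne y}|f(x)-f(y)|/\mathsf{d}_X(x,y)$. *)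

theory Defs
  imports "HOL-Analysis.Analysis"
begin

text \<open>A finite-dimensional (necessarily unital) C*-algebra: the carrier is a type of class
  real_normed_algebra_1 (its norm is the C*-norm, norm 1 = 1), together with a complex scalar
  multiplication csm extending the real one and an involution st.\<close>

definition fd_cstar_algebra :: "(complex \<Rightarrow> 'a::real_normed_algebra_1 \<Rightarrow> 'a) \<Rightarrow> ('a \<Rightarrow> 'a) \<Rightarrow> bool" where
  "fd_cstar_algebra csm st \<longleftrightarrow>
     (\<forall>r x. csm (complex_of_real r) x = scaleR r x) \<and>
     (\<forall>c d x. csm (c * d) x = csm c (csm d x)) \<and>
     (\<forall>c d x. csm (c + d) x = csm c x + csm d x) \<and>
     (\<forall>c x y. csm c (x + y) = csm c x + csm c y) \<and>
     (\<forall>c x y. csm c (x * y) = csm c x * y) \<and>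
     (\<forall>c x y. csm c (x * y) = x * csm c y) \<and>
     (\<forall>c x. norm (csm c x) = cmod c * norm x) \<and>
     (\<forall>x. st (st x) = x) \<and>
     (\<forall>x y. st (x + y) = st x + st y) \<and>
     (\<forall>c x. st (csm c x) = csm (cnj c) (st x)) \<and>
     (\<forall>x y. st (x * y) = st y * st x) \<and>
     (\<forall>x. norm (st x * x) = (norm x)\<^sup>2) \<and>
     (\<exists>B. finite B \<and> (\<forall>x. \<exists>u. x = (\<Sum>b\<in>B. csm (u b) b)))"

text \<open>A norm on the algebra viewed as a real vector space (complex norms are in particular real norms).\<close>
definition is_norm_on :: "('a::real_vector \<Rightarrow> real) \<Rightarrow> bool" where
  "is_norm_on n \<longleftrightarrow> (\<forall>x. 0 \<le> n x) \<and> (\<forall>x. n x = 0 \<longleftrightarrow> x = 0) \<and>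
     (\<forall>x y. n (x + y) \<le> n x + n y) \<and> (\<forall>r x. n (scaleR r x) = \<bar>r\<bar> * n x)"

text \<open>Elements of C(X,A): continuous functions on X (values outside X are irrelevant).\<close>
definition CXA :: "'x::metric_space set \<Rightarrow> ('x \<Rightarrow> 'a::real_normed_vector) set" where
  "CXA X = {a. continuous_on X a}"

definition self_adjoint_fun :: "'x set \<Rightarrow> ('a \<Rightarrow> 'a) \<Rightarrow> ('x \<Rightarrow> 'a) \<Rightarrow> bool" where
  "self_adjoint_fun X st a \<longleftrightarrow> (\<forall>x\<in>X. st (a x) = a x)"

definition is_state :: "'x::metric_space set \<Rightarrow> (complex \<Rightarrow> 'a::real_normed_algebra_1 \<Rightarrow> 'a) \<Rightarrow> ('a \<Rightarrow> 'a)
     \<Rightarrow> (('x \<Rightarrow> 'a) \<Rightarrow> complex) \<Rightarrow> bool" where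
  "is_state X csm st \<mu> \<longleftrightarrow>
     (\<forall>a\<in>CXA X. \<forall>b\<in>CXA X. (\<forall>x\<in>X. a x = b x) \<longrightarrow> \<mu> a = \<mu> b) \<and>
     (\<forall>a\<in>CXA X. \<forall>b\<in>CXA X. \<mu> (\<lambda>x. a x + b x) = \<mu> a + \<mu> b) \<and>
     (\<forall>a\<in>CXA X. \<forall>c. \<mu> (\<lambda>x. csm c (a x)) = c * \<mu> a) \<and>
     (\<forall>a\<in>CXA X. Im (\<mu> (\<lambda>x. st (a x) * a x)) = 0 \<and> Re (\<mu> (\<lambda>x. st (a x) * a x)) \<ge> 0) \<and>
     \<mu> (\<lambda>x. 1) = 1"

definition supnorm :: "'x set \<Rightarrow> ('x \<Rightarrow> 'a::real_normed_vector) \<Rightarrow> ennreal" where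
  "supnorm X a = (SUP x\<in>X. ennreal (norm (a x)))"

text \<open>l^(n)_{d_X}(a), with the convention sup \<emptyset> = 0, valued in [0,\<infinity>].\<close>
definition lip_n :: "'x::metric_space set \<Rightarrow> ('a::real_vector \<Rightarrow> real) \<Rightarrow> ('x \<Rightarrow> 'a) \<Rightarrow> ennreal" where
  "lip_n X n a = (SUP (x, y)\<in>{(x, y). x \<in> X \<and> y \<in> X \<and> x \<noteq> y}. ennreal (n (a x - a y) / dist x y))"

definition lip_scalar :: "'x::metric_space set \<Rightarrow> ('x \<Rightarrow> complex) \<Rightarrow> ennreal" where
  "lip_scalar X f = (SUP (x, y)\<in>{(x, y). x \<in> X \<and> y \<in> X \<and> x \<noteq> y}. ennreal (cmod (f x - f y) / dist x y))"

datatype qchoice = Q_CX | Q_C | Q_mu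

definition CX_scalar :: "'x::metric_space set \<Rightarrow> (complex \<Rightarrow> 'a::real_normed_algebra_1 \<Rightarrow> 'a) \<Rightarrow> ('x \<Rightarrow> 'a) set" where
  "CX_scalar X csm = {b \<in> CXA X. \<forall>x\<in>X. b x \<in> range (\<lambda>z. csm z 1)}"

definition Lq :: "'x::metric_space set \<Rightarrow> (complex \<Rightarrow> 'a::real_normed_algebra_1 \<Rightarrow> 'a)
     \<Rightarrow> (('x \<Rightarrow> 'a) \<Rightarrow> complex) \<Rightarrow> ('a \<Rightarrow> real) \<Rightarrow> qchoice \<Rightarrow> ('x \<Rightarrow> 'a) \<Rightarrow> ennreal" where
  "Lq X csm \<mu> n q a = max (lip_n X n a)
     (case q of
        Q_CX \<Rightarrow> (INF b\<in>CX_scalar X csm. supnorm X (\<lambda>x. a x - b x))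
      | Q_C \<Rightarrow> (INF z. supnorm X (\<lambda>x. a x - csm z 1))
      | Q_mu \<Rightarrow> supnorm X (\<lambda>x. a x - csm (\<mu> a) 1))"

definition cmap :: "(complex \<Rightarrow> 'a \<Rightarrow> 'a) \<Rightarrow> ('x \<Rightarrow> complex) \<Rightarrow> 'x \<Rightarrow> 'a::real_normed_algebra_1" where
  "cmap csm f x = csm (f x) 1"

end

theory Submission
  imports Defs
begin

lemma nrm_0: "is_norm_on N \<Longrightarrow> N 0 = 0"
  unfolding is_norm_on_def by auto
lemma nrm_nonneg: "is_norm_on N \<Longrightarrow> 0 \<le> N x"
  unfolding is_norm_on_def by auto
lemma nrm_tri: "is_norm_on N \<Longrightarrow> N (x + y) \<le> N x + N y"
  unfolding is_norm_on_def by auto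
lemma nrm_scale: "is_norm_on N \<Longrightarrow> N (r *\<^sub>R x) = \<bar>r\<bar> * N x"
  unfolding is_norm_on_def by auto
lemma nrm_minus: "is_norm_on N \<Longrightarrow> N (- x) = N x"
  using nrm_scale[of N "-1" x] by simp
lemma nrm_commute: "is_norm_on N \<Longrightarrow> N (x - y) = N (y - x)"
  using nrm_minus[of N "y - x"] by simp
lemma nrm_diff: "is_norm_on N \<Longrightarrow> N (x - y) \<le> N x + N y"
  using nrm_tri[of N x "-y"] nrm_minus[of N y] by simp
lemma nrm_tri3: "is_norm_on N \<Longrightarrow> N (x - z) \<le> N (x - y) + N (y - z)"
  using nrm_tri[of N "x - y" "y - z"] by simp
lemma nrm_sum: "is_norm_on N \<Longrightarrow> N (\<Sum>s\<in>S. f s) \<le> (\<Sum>s\<in>S. N (f s))"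
proof (induction S rule: infinite_finite_induct)
  case (infinite A) then show ?case by (simp add: nrm_0)
next
  case empty then show ?case by (simp add: nrm_0)
next
  case (insert x F)
  then show ?case using nrm_tri[of N "f x" "sum f F"] by simp
qed
lemma nrm_norm: "is_norm_on norm"
  unfolding is_norm_on_def by (auto simp: norm_triangle_ineq)


lemma dist_pos_sub:
  fixes N :: "'a::real_vector \<Rightarrow> real"
  assumes N: "is_norm_on N" and fin: "finite S" and bS: "b \<notin> span S"
    and IH: "\<forall>u. (\<Sum>s\<in>S. \<bar>u s\<bar>) \<le> C * N (\<Sum>s\<in>S. u s *\<^sub>R s)" and C0: "C \<ge> 0"
  shows "\<exists>d>0. \<forall>w. d \<le> N (b - (\<Sum>s\<in>S. w s *\<^sub>R s))"
proof (rule ccontr)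
  define W where "W w = (\<Sum>s\<in>S. w s *\<^sub>R s)" for w
  assume "\<not> ?thesis"
  then have "\<forall>d>0. \<exists>w. N (b - W w) < d" unfolding W_def by (auto simp: not_le)
  then have "\<forall>j::nat. \<exists>w. N (b - W w) < 1 / Suc j" by auto
  then obtain w where w: "\<And>j. N (b - W (w j)) < 1 / Suc j" by metis
  have Wdiff: "W (\<lambda>s. w j s - w l s) = W (w j) - W (w l)" for j l
    unfolding W_def by (simp add: scaleR_diff_left sum_subtractf)
  have cb: "\<bar>w j s - w l s\<bar> \<le> C * (1 / Suc j + 1 / Suc l)" if "s \<in> S" for j l s
  proof -
    have "\<bar>w j s - w l s\<bar> \<le> (\<Sum>s\<in>S. \<bar>w j s - w l s\<bar>)"
      using that fin by (intro member_le_sum) auto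
    also have "\<dots> \<le> C * N (W (\<lambda>s. w j s - w l s))" using IH[rule_format, of "\<lambda>s. w j s - w l s"] unfolding W_def by simp
    also have "\<dots> = C * N (W (w j) - W (w l))" by (simp only: Wdiff)
    also have "N (W (w j) - W (w l)) \<le> N (b - W (w j)) + N (b - W (w l))"
      using nrm_tri3[OF N, of "W (w j)" "W (w l)" b] nrm_commute[OF N, of "W (w j)" b] by linarith
    then have "C * N (W (w j) - W (w l)) \<le> C * (1 / Suc j + 1 / Suc l)"
      using w[of j] w[of l] C0 by (intro mult_left_mono) auto
    finally show ?thesis .
  qed
  have conv: "\<exists>L. (\<lambda>j. w j s) \<longlonglongrightarrow> L" if "s \<in> S" for s
  proof -
    have "Cauchy (\<lambda>j. w j s)"
    proof (rule metric_CauchyI)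
      fix e :: real assume e: "e > 0"
      obtain M :: nat where M: "(C + 1) * 2 / e < M" using reals_Archimedean2 by blast
      have "(C + 1) * 2 / e > 0" using e C0 by simp
      then have "real M > 0" using M by linarith
      then have Mpos: "M > 0" by simp
      show "\<exists>M. \<forall>m\<ge>M. \<forall>n\<ge>M. dist (w m s) (w n s) < e"
      proof (intro exI allI impI)
        fix m n assume mn: "M \<le> m" "M \<le> n"
        have a: "1 / real (Suc m) \<le> 1 / M" using mn Mpos by (intro divide_left_mono) auto
        have b: "1 / real (Suc n) \<le> 1 / M" using mn Mpos by (intro divide_left_mono) auto
        have "dist (w m s) (w n s) \<le> C * (1 / Suc m + 1 / Suc n)"
          using cb[OF that] by (simp add: dist_real_def)
        also have "\<dots> \<le> C * (2 / M)" using a b C0 by (intro mult_left_mono) auto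
        also have "\<dots> < e"
        proof -
          have "(C + 1) * 2 < e * M" using M e by (simp add: field_simps)
          then have "C * 2 < e * M" by (simp add: algebra_simps)
          then show ?thesis using Mpos by (simp add: field_simps)
        qed
        finally show "dist (w m s) (w n s) < e" .
      qed
    qed
    then show ?thesis using Cauchy_convergent_iff convergent_def by blast
  qed
  then obtain ws where ws: "\<And>s. s \<in> S \<Longrightarrow> (\<lambda>j. w j s) \<longlonglongrightarrow> ws s" by metis
  have l1: "(\<lambda>j. 1 / real (Suc j)) \<longlonglongrightarrow> 0"
    using LIMSEQ_inverse_real_of_nat by (simp add: inverse_eq_divide)
  have l2: "(\<lambda>j. \<bar>w j s - ws s\<bar> * N s) \<longlonglongrightarrow> 0" if "s \<in> S" for s
  proof -
    have "(\<lambda>j. w j s - ws s) \<longlonglongrightarrow> 0" using ws[OF that] by (simp add: LIM_zero)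
    then have "(\<lambda>j. \<bar>w j s - ws s\<bar>) \<longlonglongrightarrow> 0" by (rule tendsto_rabs_zero)
    then show ?thesis by (rule tendsto_mult_left_zero)
  qed
  have l3: "(\<lambda>j. \<Sum>s\<in>S. \<bar>w j s - ws s\<bar> * N s) \<longlonglongrightarrow> (\<Sum>s\<in>S. 0)"
    by (rule tendsto_sum) (rule l2)
  have lim0: "(\<lambda>j. 1 / real (Suc j) + (\<Sum>s\<in>S. \<bar>w j s - ws s\<bar> * N s)) \<longlonglongrightarrow> 0"
    using tendsto_add[OF l1 l3] by simp
  have bnd: "N (b - W ws) \<le> 1 / real (Suc j) + (\<Sum>s\<in>S. \<bar>w j s - ws s\<bar> * N s)" for j
  proof -
    have "N (b - W ws) \<le> N (b - W (w j)) + N (W (w j) - W ws)" by (rule nrm_tri3[OF N])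
    also have "W (w j) - W ws = (\<Sum>s\<in>S. (w j s - ws s) *\<^sub>R s)"
      unfolding W_def by (simp add: scaleR_diff_left sum_subtractf)
    also have "N \<dots> \<le> (\<Sum>s\<in>S. N ((w j s - ws s) *\<^sub>R s))" by (rule nrm_sum[OF N])
    also have "\<dots> = (\<Sum>s\<in>S. \<bar>w j s - ws s\<bar> * N s)" by (simp add: nrm_scale[OF N])
    finally show ?thesis using w[of j] by linarith
  qed
  have "N (b - W ws) \<le> 0"
  proof (rule tendsto_le[OF _ lim0 tendsto_const])
    show "\<forall>\<^sub>F j in sequentially. N (b - W ws) \<le> 1 / real (Suc j) + (\<Sum>s\<in>S. \<bar>w j s - ws s\<bar> * N s)"
      by (rule always_eventually) (use bnd in blast)
  qed simp
  then have "b = W ws" using N unfolding is_norm_on_def by (metis antisym eq_iff_diff_eq_0)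
  moreover have "W ws \<in> span S" unfolding W_def by (intro span_sum span_scale span_base)
  ultimately have "b \<in> span S" by simp
  then show False using bS by simp
qed


lemma coord_bound:
  fixes N :: "'a::real_vector \<Rightarrow> real"
  assumes N: "is_norm_on N" and fin: "finite S" and ind: "independent S"
  shows "\<exists>C\<ge>0. \<forall>u. (\<Sum>s\<in>S. \<bar>u s\<bar>) \<le> C * N (\<Sum>s\<in>S. u s *\<^sub>R s)"
  using fin ind
proof (induction S rule: finite_induct)
  case empty then show ?case by auto
next
  case (insert b S)
  then have indS: "independent S" and bS: "b \<notin> span S"
    by (auto simp: independent_insert)
  from insert.IH[OF indS] obtain C where C0: "C \<ge> 0"
    and C: "\<forall>u. (\<Sum>s\<in>S. \<bar>u s\<bar>) \<le> C * N (\<Sum>s\<in>S. u s *\<^sub>R s)" by blast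
  obtain d where d0: "d > 0" and d: "\<forall>w. d \<le> N (b - (\<Sum>s\<in>S. w s *\<^sub>R s))"
    using dist_pos_sub[OF N insert.hyps(1) bS C C0] by blast
  define K where "K = 1 / d + C + C * N b / d"
  have Nb: "N b \<ge> 0" using nrm_nonneg[OF N] .
  show ?case
  proof (intro exI[of _ K] conjI allI)
    show "0 \<le> K" unfolding K_def using d0 C0 Nb by simp
    fix u :: "'a \<Rightarrow> real"
    define x where "x = (\<Sum>s\<in>insert b S. u s *\<^sub>R s)"
    define Wu where "Wu = (\<Sum>s\<in>S. u s *\<^sub>R s)"
    have x: "x = u b *\<^sub>R b + Wu" unfolding x_def Wu_def using insert.hyps by simp
    have ub: "\<bar>u b\<bar> * d \<le> N x"
    proof (cases "u b = 0")
      case True then show ?thesis using nrm_nonneg[OF N] by simp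
    next
      case False
      have "x = u b *\<^sub>R (b - (\<Sum>s\<in>S. (- u s / u b) *\<^sub>R s))"
        unfolding x Wu_def using False
        by (simp add: scaleR_right_diff_distrib scaleR_sum_right sum_negf[symmetric])
      then have "N x = \<bar>u b\<bar> * N (b - (\<Sum>s\<in>S. (- u s / u b) *\<^sub>R s))"
        using nrm_scale[OF N] by simp
      moreover have "d \<le> N (b - (\<Sum>s\<in>S. (- u s / u b) *\<^sub>R s))" using d[rule_format, of "\<lambda>s. - u s / u b"] by simp
      ultimately show ?thesis by (simp add: mult_left_mono)
    qed
    then have ub': "\<bar>u b\<bar> \<le> N x / d" using d0 by (simp add: field_simps)
    have "N Wu \<le> N x + \<bar>u b\<bar> * N b"
    proof -
      have "Wu = x - u b *\<^sub>R b" using x by simp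
      then have "N Wu \<le> N x + N (u b *\<^sub>R b)" using nrm_diff[OF N] by simp
      then show ?thesis by (simp add: nrm_scale[OF N])
    qed
    also have "\<dots> \<le> N x + N x / d * N b" using mult_right_mono[OF ub' Nb] by simp
    finally have NW: "N Wu \<le> N x + N x / d * N b" .
    have "(\<Sum>s\<in>insert b S. \<bar>u s\<bar>) = \<bar>u b\<bar> + (\<Sum>s\<in>S. \<bar>u s\<bar>)" using insert.hyps by simp
    also have "\<dots> \<le> N x / d + C * N Wu" using ub' C unfolding Wu_def by (meson add_mono)
    also have "\<dots> \<le> N x / d + C * (N x + N x / d * N b)" using NW C0 by (simp add: mult_left_mono)
    also have "\<dots> = K * N x" unfolding K_def by (simp add: field_simps)
    finally show "(\<Sum>s\<in>insert b S. \<bar>u s\<bar>) \<le> K * N (\<Sum>s\<in>insert b S. u s *\<^sub>R s)" unfolding x_def .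
  qed
qed


context
  fixes csm :: "complex \<Rightarrow> 'a::real_normed_algebra_1 \<Rightarrow> 'a" and st :: "'a \<Rightarrow> 'a"
  assumes fd: "fd_cstar_algebra csm st"
begin

lemma csm_real: "csm (complex_of_real r) x = r *\<^sub>R x" using fd unfolding fd_cstar_algebra_def by simp
lemma csm_mult: "csm (c * d) x = csm c (csm d x)" using fd unfolding fd_cstar_algebra_def by simp
lemma csm_addl: "csm (c + d) x = csm c x + csm d x" using fd unfolding fd_cstar_algebra_def by simp
lemma csm_addr: "csm c (x + y) = csm c x + csm c y" using fd unfolding fd_cstar_algebra_def by simp
lemma csm_ml: "csm c (x * y) = csm c x * y" using fd unfolding fd_cstar_algebra_def by simp
lemma csm_mr: "csm c (x * y) = x * csm c y"
  using fd[unfolded fd_cstar_algebra_def, THEN conjunct2, THEN conjunct2, THEN conjunct2, THEN conjunct2, THEN conjunct2, THEN conjunct1] by blast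
lemma csm_norm: "norm (csm c x) = cmod c * norm x" using fd unfolding fd_cstar_algebra_def by simp
lemma st_st: "st (st x) = x" using fd unfolding fd_cstar_algebra_def by simp
lemma st_add: "st (x + y) = st x + st y" using fd unfolding fd_cstar_algebra_def by simp
lemma st_csm: "st (csm c x) = csm (cnj c) (st x)" using fd unfolding fd_cstar_algebra_def by simp
lemma st_mult: "st (x * y) = st y * st x" using fd unfolding fd_cstar_algebra_def by simp

lemma csm_0l[simp]: "csm 0 x = 0" using csm_real[of 0 x] by simp
lemma csm_1l[simp]: "csm 1 x = x" using csm_real[of 1 x] by simp
lemma csm_0r[simp]: "csm c 0 = 0" using csm_addr[of c 0 0] by simp
lemma csm_negl: "csm (- c) x = - csm c x" using csm_addl[of c "-c" x] by (simp add: add_eq_0_iff)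
lemma csm_negr: "csm c (- x) = - csm c x" using csm_addr[of c x "-x"] by (simp add: add_eq_0_iff)
lemma csm_diffl: "csm (c - d) x = csm c x - csm d x" using csm_addl[of c "-d" x] csm_negl by simp
lemma csm_diffr: "csm c (x - y) = csm c x - csm c y" using csm_addr[of c x "-y"] csm_negr by simp
lemma st_1[simp]: "st 1 = 1"
proof -
  have "st (st 1 * 1) = st 1 * st (st 1)" by (rule st_mult)
  then show ?thesis by (simp add: st_st)
qed
lemma csm_scaleR: "csm c (r *\<^sub>R x) = r *\<^sub>R csm c x"
  using csm_mult[of c "complex_of_real r" x] csm_mult[of "complex_of_real r" c x] csm_real
  by (simp add: mult.commute)

lemma fd_basis: "\<exists>B::'a set. finite B \<and> independent B \<and> (\<forall>x. x \<in> span B)"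
proof -
  obtain B0 where fin0: "finite B0" and B0: "\<forall>x. \<exists>u. x = (\<Sum>b\<in>B0. csm (u b) b)"
    using fd[unfolded fd_cstar_algebra_def, THEN conjunct2, THEN conjunct2, THEN conjunct2, THEN conjunct2, THEN conjunct2, THEN conjunct2, THEN conjunct2, THEN conjunct2, THEN conjunct2, THEN conjunct2, THEN conjunct2, THEN conjunct2] by blast
  define T where "T = B0 \<union> (\<lambda>b. csm \<i> b) ` B0"
  have finT: "finite T" unfolding T_def using fin0 by simp
  have spT: "x \<in> span T" for x
  proof -
    obtain u where u: "x = (\<Sum>b\<in>B0. csm (u b) b)" using B0 by blast
    have cz: "csm z b = Re z *\<^sub>R b + Im z *\<^sub>R csm \<i> b" for z b
    proof -
      have e: "complex_of_real (Re z) + complex_of_real (Im z) * \<i> = z" by (simp add: complex_eq_iff)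
      have "csm z b = csm (complex_of_real (Re z) + complex_of_real (Im z) * \<i>) b" by (simp only: e)
      also have "\<dots> = csm (complex_of_real (Re z)) b + csm (complex_of_real (Im z)) (csm \<i> b)"
        by (simp only: csm_addl csm_mult)
      finally have "csm z b = csm (complex_of_real (Re z)) b + csm (complex_of_real (Im z)) (csm \<i> b)" .
      then show ?thesis by (simp add: csm_real)
    qed
    have "x = (\<Sum>b\<in>B0. Re (u b) *\<^sub>R b + Im (u b) *\<^sub>R csm \<i> b)"
      by (subst u, rule sum.cong[OF refl], rule cz)
    moreover have "(\<Sum>b\<in>B0. Re (u b) *\<^sub>R b + Im (u b) *\<^sub>R csm \<i> b) \<in> span T"
    proof (rule span_sum)
      fix b assume b: "b \<in> B0"
      have "b \<in> T" "csm \<i> b \<in> T" unfolding T_def using b by auto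
      then show "Re (u b) *\<^sub>R b + Im (u b) *\<^sub>R csm \<i> b \<in> span T"
        by (intro span_add span_scale span_base)
    qed
    ultimately show ?thesis by simp
  qed
  obtain B where BT: "B \<subseteq> T" and ind: "independent B" and TB: "T \<subseteq> span B"
    using maximal_independent_subset[of T] by blast
  have "span T \<subseteq> span B" using span_mono[OF TB] by (simp add: span_span)
  then show ?thesis using spT ind finite_subset[OF BT finT] by blast
qed

end

lemma norm_equiv:
  fixes N1 N2 :: "'a::real_vector \<Rightarrow> real" and B :: "'a set"
  assumes fin: "finite B" and ind: "independent B" and sp: "\<forall>x. x \<in> span B"
    and N1: "is_norm_on N1" and N2: "is_norm_on N2"
  shows "\<exists>K>0. \<forall>x. N1 x \<le> K * N2 x"
proof -
  obtain C where C0: "C \<ge> 0" and C: "\<forall>u. (\<Sum>s\<in>B. \<bar>u s\<bar>) \<le> C * N2 (\<Sum>s\<in>B. u s *\<^sub>R s)"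
    using coord_bound[OF N2 fin ind] by blast
  define M where "M = (\<Sum>b\<in>B. N1 b)"
  have M0: "M \<ge> 0" unfolding M_def by (intro sum_nonneg nrm_nonneg[OF N1])
  have Mb: "N1 b \<le> M" if "b \<in> B" for b
    unfolding M_def using fin that by (intro member_le_sum nrm_nonneg[OF N1]) auto
  show ?thesis
  proof (intro exI[of _ "M * C + 1"] conjI allI)
    show "M * C + 1 > 0" using M0 C0 by (simp add: add_nonneg_pos)
    fix x
    define r where "r = representation B x"
    have x: "x = (\<Sum>b\<in>B. r b *\<^sub>R b)" unfolding r_def
      using sum_representation_eq[OF ind sp[rule_format] fin] by simp
    have "N1 x \<le> (\<Sum>b\<in>B. N1 (r b *\<^sub>R b))" by (subst x) (rule nrm_sum[OF N1])
    also have "\<dots> = (\<Sum>b\<in>B. \<bar>r b\<bar> * N1 b)" by (rule sum.cong[OF refl], rule nrm_scale[OF N1])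
    also have "\<dots> \<le> (\<Sum>b\<in>B. \<bar>r b\<bar> * M)"
    proof (rule sum_mono)
      fix b assume "b \<in> B"
      then show "\<bar>r b\<bar> * N1 b \<le> \<bar>r b\<bar> * M" using Mb by (simp add: mult_left_mono)
    qed
    also have "\<dots> = M * (\<Sum>b\<in>B. \<bar>r b\<bar>)" by (simp add: sum_distrib_left mult_ac)
    also have "\<dots> \<le> M * (C * N2 x)"
    proof (rule mult_left_mono[OF _ M0])
      have "(\<Sum>b\<in>B. \<bar>r b\<bar>) \<le> C * N2 (\<Sum>b\<in>B. r b *\<^sub>R b)" using C by blast
      then show "(\<Sum>b\<in>B. \<bar>r b\<bar>) \<le> C * N2 x" by (simp only: x[symmetric])
    qed
    also have "\<dots> \<le> (M * C + 1) * N2 x" using nrm_nonneg[OF N2, of x] by (simp add: distrib_right)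
    finally show "N1 x \<le> (M * C + 1) * N2 x" .
  qed
qed


context
  fixes X :: "'x::metric_space set"
    and csm :: "complex \<Rightarrow> 'a::real_normed_algebra_1 \<Rightarrow> 'a" and st :: "'a \<Rightarrow> 'a"
    and \<mu> :: "('x \<Rightarrow> 'a) \<Rightarrow> complex"
  assumes fd: "fd_cstar_algebra csm st" and sta: "is_state X csm st \<mu>"
begin

lemma mu_resp: "a \<in> CXA X \<Longrightarrow> b \<in> CXA X \<Longrightarrow> (\<And>x. x \<in> X \<Longrightarrow> a x = b x) \<Longrightarrow> \<mu> a = \<mu> b"
  using sta unfolding is_state_def by blast
lemma mu_add: "a \<in> CXA X \<Longrightarrow> b \<in> CXA X \<Longrightarrow> \<mu> (\<lambda>x. a x + b x) = \<mu> a + \<mu> b"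
  using sta unfolding is_state_def by blast
lemma mu_scal: "a \<in> CXA X \<Longrightarrow> \<mu> (\<lambda>x. csm c (a x)) = c * \<mu> a"
  using sta unfolding is_state_def by blast
lemma mu_pos: "a \<in> CXA X \<Longrightarrow> Im (\<mu> (\<lambda>x. st (a x) * a x)) = 0 \<and> Re (\<mu> (\<lambda>x. st (a x) * a x)) \<ge> 0"
  using sta unfolding is_state_def by blast
lemma mu_one: "\<mu> (\<lambda>x. 1) = 1"
  using sta unfolding is_state_def by blast

lemma CXA_const[simp]: "(\<lambda>x. v) \<in> CXA X" unfolding CXA_def mem_Collect_eq by (simp add: continuous_on_const)

lemma bl_csm: "bounded_linear (csm c)"
  by (rule bounded_linear_intro[where K="cmod c"])
     (auto simp: csm_addr[OF fd] csm_scaleR[OF fd] csm_norm[OF fd] mult.commute)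

lemma CXA_csm[simp]: "a \<in> CXA X \<Longrightarrow> (\<lambda>x. csm c (a x)) \<in> CXA X"
  unfolding CXA_def mem_Collect_eq using bounded_linear.continuous_on[OF bl_csm] by blast
lemma CXA_add[simp]: "a \<in> CXA X \<Longrightarrow> b \<in> CXA X \<Longrightarrow> (\<lambda>x. a x + b x) \<in> CXA X"
  unfolding CXA_def mem_Collect_eq by (simp add: continuous_on_add)
lemma CXA_diff[simp]: "a \<in> CXA X \<Longrightarrow> b \<in> CXA X \<Longrightarrow> (\<lambda>x. a x - b x) \<in> CXA X"
  unfolding CXA_def mem_Collect_eq by (simp add: continuous_on_diff)
lemma CXA_scaleR[simp]: "continuous_on X g \<Longrightarrow> (\<lambda>x. g x *\<^sub>R v) \<in> CXA X"
  unfolding CXA_def mem_Collect_eq by (intro continuous_intros)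

lemma mu_zero: "\<mu> (\<lambda>x. 0) = 0"
  using mu_scal[of "\<lambda>x. 1" 0] by (simp add: csm_0l[OF fd])

lemma X_ne: "X \<noteq> {}"
proof
  assume "X = {}"
  then have "\<mu> (\<lambda>x. 1) = \<mu> (\<lambda>x. 0)" by (intro mu_resp) (auto simp: CXA_def)
  then show False using mu_one mu_zero by simp
qed

lemma mu_neg: "a \<in> CXA X \<Longrightarrow> \<mu> (\<lambda>x. - a x) = - \<mu> a"
  using mu_scal[of a "-1"] by (simp add: csm_negl[OF fd] csm_1l[OF fd])

lemma mu_diff: "a \<in> CXA X \<Longrightarrow> b \<in> CXA X \<Longrightarrow> \<mu> (\<lambda>x. a x - b x) = \<mu> a - \<mu> b"
proof -
  assume a: "a \<in> CXA X" and b: "b \<in> CXA X"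
  have "(\<lambda>x. - b x) \<in> CXA X" using CXA_diff[OF CXA_const b, of 0] by simp
  then have "\<mu> (\<lambda>x. a x + - b x) = \<mu> a + \<mu> (\<lambda>x. - b x)" using mu_add[OF a] by blast
  then show ?thesis using mu_neg[OF b] by simp
qed

lemma mu_sum: "finite F \<Longrightarrow> (\<And>i. i \<in> F \<Longrightarrow> f i \<in> CXA X) \<Longrightarrow>
    \<mu> (\<lambda>x. \<Sum>i\<in>F. f i x) = (\<Sum>i\<in>F. \<mu> (f i))"
proof (induction F rule: finite_induct)
  case empty then show ?case by (simp add: mu_zero)
next
  case (insert j F)
  have "(\<lambda>x. \<Sum>i\<in>F. f i x) \<in> CXA X"
    using insert.prems unfolding CXA_def mem_Collect_eq by (intro continuous_on_sum) auto
  then have "\<mu> (\<lambda>x. f j x + (\<Sum>i\<in>F. f i x)) = \<mu> (f j) + \<mu> (\<lambda>x. \<Sum>i\<in>F. f i x)"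
    using mu_add[of "f j" "\<lambda>x. \<Sum>i\<in>F. f i x"] insert.prems by simp
  then show ?case using insert by simp
qed

lemma st_scaleR: "st (r *\<^sub>R t) = r *\<^sub>R st t"
  using st_csm[OF fd, of "complex_of_real r" t] by (simp add: csm_real[OF fd])

lemma mu_pos_fun:
  assumes k: "continuous_on X k" and k0: "\<And>x. k x \<ge> 0"
  shows "Im (\<mu> (\<lambda>x. k x *\<^sub>R (st t * t))) = 0 \<and> Re (\<mu> (\<lambda>x. k x *\<^sub>R (st t * t))) \<ge> 0"
proof -
  define g where "g x = sqrt (k x) *\<^sub>R t" for x
  have g: "g \<in> CXA X" unfolding g_def CXA_def mem_Collect_eq by (intro continuous_intros k)
  have "st (g x) * g x = k x *\<^sub>R (st t * t)" for x
    unfolding g_def st_scaleR using k0[of x] by simp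
  then have "(\<lambda>x. st (g x) * g x) = (\<lambda>x. k x *\<^sub>R (st t * t))" by auto
  then show ?thesis using mu_pos[OF g] by simp
qed

lemma pos_bound:
  assumes h: "continuous_on X h" and h0: "\<And>x. h x \<ge> 0" and hM: "\<And>x. x \<in> X \<Longrightarrow> h x \<le> M"
  shows "cmod (\<mu> (\<lambda>x. h x *\<^sub>R (st t * t))) \<le> M * cmod (\<mu> (\<lambda>x. st t * t))"
proof -
  define p where "p = st t * t"
  define h2 where "h2 x = max 0 (M - h x)" for x
  have h2c: "continuous_on X h2" unfolding h2_def by (intro continuous_intros h)
  have M0: "M \<ge> 0" using X_ne hM h0 by (metis all_not_in_conv order_trans)
  have P1: "Im (\<mu> (\<lambda>x. h x *\<^sub>R p)) = 0 \<and> Re (\<mu> (\<lambda>x. h x *\<^sub>R p)) \<ge> 0"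
    unfolding p_def by (rule mu_pos_fun[OF h h0])
  have P2: "Im (\<mu> (\<lambda>x. h2 x *\<^sub>R p)) = 0 \<and> Re (\<mu> (\<lambda>x. h2 x *\<^sub>R p)) \<ge> 0"
    unfolding p_def by (rule mu_pos_fun[OF h2c]) (simp add: h2_def)
  have "\<mu> (\<lambda>x. h x *\<^sub>R p + h2 x *\<^sub>R p) = \<mu> (\<lambda>x. csm (complex_of_real M) p)"
  proof (rule mu_resp)
    show "(\<lambda>x. h x *\<^sub>R p + h2 x *\<^sub>R p) \<in> CXA X" using h h2c by simp
    show "(\<lambda>x. csm (complex_of_real M) p) \<in> CXA X" by simp
    fix x assume "x \<in> X"
    then have "h x + h2 x = M" using hM[of x] unfolding h2_def by simp
    then show "h x *\<^sub>R p + h2 x *\<^sub>R p = csm (complex_of_real M) p"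
      by (simp add: csm_real[OF fd] scaleR_add_left[symmetric])
  qed
  then have eq: "\<mu> (\<lambda>x. h x *\<^sub>R p) + \<mu> (\<lambda>x. h2 x *\<^sub>R p) = complex_of_real M * \<mu> (\<lambda>x. p)"
    using mu_add[of "\<lambda>x. h x *\<^sub>R p" "\<lambda>x. h2 x *\<^sub>R p"] mu_scal[of "\<lambda>x. p" "complex_of_real M"] h h2c
    by simp
  have "cmod (\<mu> (\<lambda>x. h x *\<^sub>R p)) = Re (\<mu> (\<lambda>x. h x *\<^sub>R p))" using P1 cmod_eq_Re by simp
  also have "\<dots> \<le> Re (\<mu> (\<lambda>x. h x *\<^sub>R p) + \<mu> (\<lambda>x. h2 x *\<^sub>R p))" using P2 by simp
  also have "\<dots> = M * Re (\<mu> (\<lambda>x. p))" unfolding eq by simp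
  also have "\<dots> \<le> M * cmod (\<mu> (\<lambda>x. p))" using M0 complex_Re_le_cmod by (simp add: mult_left_mono)
  finally show ?thesis unfolding p_def .
qed

end

context
  fixes csm :: "complex \<Rightarrow> 'a::real_normed_algebra_1 \<Rightarrow> 'a" and st :: "'a \<Rightarrow> 'a"
  assumes fd: "fd_cstar_algebra csm st"
begin

lemma J_add: "csm \<i> (x + y) = csm \<i> x + csm \<i> y" by (rule csm_addr[OF fd])
lemma J_diff: "csm \<i> (x - y) = csm \<i> x - csm \<i> y" by (rule csm_diffr[OF fd])
lemma J_scaleR: "csm \<i> (r *\<^sub>R x) = r *\<^sub>R csm \<i> x" by (rule csm_scaleR[OF fd])
lemma J_J: "csm \<i> (csm \<i> x) = - x"
  using csm_mult[OF fd, of \<i> \<i> x] csm_negl[OF fd, of 1 x] by (simp add: csm_1l[OF fd])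
lemma J_neg: "csm (- \<i>) x = - csm \<i> x" by (rule csm_negl[OF fd])

lemma pol_expand:
  assumes c: "cnj c * c = 1"
  shows "st (s + csm c 1) * (s + csm c 1) = st s * s + csm c (st s) + csm (cnj c) s + 1"
proof -
  have "st (s + csm c 1) = st s + csm (cnj c) 1"
    by (simp add: st_add[OF fd] st_csm[OF fd] st_1[OF fd])
  then have "st (s + csm c 1) * (s + csm c 1) = st s * s + st s * csm c 1 + csm (cnj c) 1 * s + csm (cnj c) 1 * csm c 1"
    by (simp add: distrib_left distrib_right add.assoc)
  also have "st s * csm c 1 = csm c (st s)" using csm_mr[OF fd, of c "st s" 1] by simp
  also have "csm (cnj c) 1 * s = csm (cnj c) s" using csm_ml[OF fd, of "cnj c" 1 s] by simp
  also have "csm (cnj c) 1 * csm c 1 = 1"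
    using csm_ml[OF fd, of "cnj c" 1 "csm c 1"] csm_mult[OF fd, of "cnj c" c 1] c by (simp add: csm_1l[OF fd])
  finally show ?thesis .
qed

definition pol :: "('a \<Rightarrow> 'a) \<Rightarrow> (complex \<Rightarrow> 'a \<Rightarrow> 'a) \<Rightarrow> 'a \<Rightarrow> complex \<Rightarrow> 'a" where
  "pol st' csm' s c = st' (s + csm' c 1) * (s + csm' c 1)"

lemma polarization:
  "s = (1/4) *\<^sub>R (pol st csm s 1 - pol st csm s (-1)) + (1/4) *\<^sub>R csm \<i> (pol st csm s \<i> - pol st csm s (-\<i>))"
proof -
  define P where "P = st s * s"
  define S where "S = st s"
  have p1: "pol st csm s 1 = P + S + s + 1"
    unfolding pol_def P_def S_def using pol_expand[of 1 s] by (simp add: csm_1l[OF fd])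
  have pm1: "pol st csm s (-1) = P - S - s + 1"
    unfolding pol_def P_def S_def using pol_expand[of "-1" s] by (simp add: csm_negl[OF fd] csm_1l[OF fd])
  have pi: "pol st csm s \<i> = P + csm \<i> S - csm \<i> s + 1"
    unfolding pol_def P_def S_def using pol_expand[of \<i> s] by (simp add: J_neg)
  have pmi: "pol st csm s (-\<i>) = P - csm \<i> S + csm \<i> s + 1"
    unfolding pol_def P_def S_def using pol_expand[of "-\<i>" s] by (simp add: J_neg)
  have "pol st csm s \<i> - pol st csm s (-\<i>) = 2 *\<^sub>R csm \<i> S - 2 *\<^sub>R csm \<i> s"
    unfolding pi pmi by (simp add: algebra_simps scaleR_2)
  then have e1: "csm \<i> (pol st csm s \<i> - pol st csm s (-\<i>)) = 2 *\<^sub>R s - 2 *\<^sub>R S"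
    by (simp add: J_diff J_scaleR J_J)
  have e2: "pol st csm s 1 - pol st csm s (-1) = 2 *\<^sub>R S + 2 *\<^sub>R s"
    unfolding p1 pm1 by (simp add: algebra_simps scaleR_2)
  show ?thesis unfolding e1 e2 by (simp add: algebra_simps scaleR_add_left[symmetric])
qed

end

context
  fixes X :: "'x::metric_space set"
    and csm :: "complex \<Rightarrow> 'a::real_normed_algebra_1 \<Rightarrow> 'a" and st :: "'a \<Rightarrow> 'a"
    and \<mu> :: "('x \<Rightarrow> 'a) \<Rightarrow> complex"
  assumes fd: "fd_cstar_algebra csm st" and sta: "is_state X csm st \<mu>"
begin

lemma mu_scaleR_fun: "a \<in> CXA X \<Longrightarrow> \<mu> (\<lambda>x. r *\<^sub>R a x) = complex_of_real r * \<mu> a"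
  using mu_scal[OF fd sta, of a "complex_of_real r"] by (simp add: csm_real[OF fd])

lemma g_bound_p:
  assumes g: "continuous_on X g" and gM: "\<And>x. x \<in> X \<Longrightarrow> \<bar>g x\<bar> \<le> M"
  shows "cmod (\<mu> (\<lambda>x. g x *\<^sub>R (st t * t))) \<le> 2 * M * cmod (\<mu> (\<lambda>x. st t * t))"
proof -
  define p where "p = st t * t"
  define gp where "gp x = max 0 (g x)" for x
  define gm where "gm x = max 0 (- g x)" for x
  have gpc: "continuous_on X gp" unfolding gp_def by (intro continuous_intros g)
  have gmc: "continuous_on X gm" unfolding gm_def by (intro continuous_intros g)
  have "(\<lambda>x. g x *\<^sub>R p) = (\<lambda>x. gp x *\<^sub>R p - gm x *\<^sub>R p)"
    by (rule ext) (simp add: gp_def gm_def scaleR_diff_left[symmetric] max_def)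
  then have "\<mu> (\<lambda>x. g x *\<^sub>R p) = \<mu> (\<lambda>x. gp x *\<^sub>R p) - \<mu> (\<lambda>x. gm x *\<^sub>R p)"
    using mu_diff[OF fd sta, of "\<lambda>x. gp x *\<^sub>R p" "\<lambda>x. gm x *\<^sub>R p"] gpc gmc
    by (simp add: CXA_scaleR[OF fd sta])
  then have "cmod (\<mu> (\<lambda>x. g x *\<^sub>R p)) \<le> cmod (\<mu> (\<lambda>x. gp x *\<^sub>R p)) + cmod (\<mu> (\<lambda>x. gm x *\<^sub>R p))"
    by (simp add: norm_triangle_ineq4)
  also have "\<dots> \<le> M * cmod (\<mu> (\<lambda>x. p)) + M * cmod (\<mu> (\<lambda>x. p))"
  proof (rule add_mono)
    show "cmod (\<mu> (\<lambda>x. gp x *\<^sub>R p)) \<le> M * cmod (\<mu> (\<lambda>x. p))"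
      unfolding p_def by (rule pos_bound[OF fd sta gpc]) (auto simp: gp_def dest!: gM)
    show "cmod (\<mu> (\<lambda>x. gm x *\<^sub>R p)) \<le> M * cmod (\<mu> (\<lambda>x. p))"
      unfolding p_def by (rule pos_bound[OF fd sta gmc]) (auto simp: gm_def dest!: gM)
  qed
  finally show ?thesis unfolding p_def by simp
qed

definition Ks :: "'a \<Rightarrow> real" where
  "Ks s = (1/2) * (cmod (\<mu> (\<lambda>x. pol st csm s 1)) + cmod (\<mu> (\<lambda>x. pol st csm s (-1)))
     + cmod (\<mu> (\<lambda>x. pol st csm s \<i>)) + cmod (\<mu> (\<lambda>x. pol st csm s (-\<i>))))"

lemma Ks_nonneg: "Ks s \<ge> 0" unfolding Ks_def by simp

lemma g_bound_s:
  assumes g: "continuous_on X g" and gM: "\<And>x. x \<in> X \<Longrightarrow> \<bar>g x\<bar> \<le> M"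
  shows "cmod (\<mu> (\<lambda>x. g x *\<^sub>R s)) \<le> M * Ks s"
proof -
  define F where "F c x = g x *\<^sub>R pol st csm s c" for c x
  have FC: "F c \<in> CXA X" for c unfolding F_def using g by (simp add: CXA_scaleR[OF fd sta])
  have JC: "(\<lambda>x. csm \<i> (F c x)) \<in> CXA X" for c using CXA_csm[OF fd sta FC] .
  have FB: "cmod (\<mu> (F c)) \<le> 2 * M * cmod (\<mu> (\<lambda>x. pol st csm s c))" for c
    unfolding F_def pol_def[OF fd] by (rule g_bound_p[OF g gM])
  have pw: "g x *\<^sub>R s = (1/4) *\<^sub>R F 1 x - (1/4) *\<^sub>R F (-1) x
       + ((1/4) *\<^sub>R csm \<i> (F \<i> x) - (1/4) *\<^sub>R csm \<i> (F (-\<i>) x))" for x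
  proof -
    have "g x *\<^sub>R s = g x *\<^sub>R ((1/4) *\<^sub>R (pol st csm s 1 - pol st csm s (-1)) + (1/4) *\<^sub>R csm \<i> (pol st csm s \<i> - pol st csm s (-\<i>)))"
      by (rule arg_cong[where f="\<lambda>y. g x *\<^sub>R y", OF polarization[OF fd]])
    then show ?thesis unfolding F_def by (simp add: J_diff[OF fd] J_scaleR[OF fd] algebra_simps)
  qed
  have "\<mu> (\<lambda>x. g x *\<^sub>R s) = \<mu> (\<lambda>x. (1/4) *\<^sub>R F 1 x - (1/4) *\<^sub>R F (-1) x
       + ((1/4) *\<^sub>R csm \<i> (F \<i> x) - (1/4) *\<^sub>R csm \<i> (F (-\<i>) x)))"
    by (simp only: pw)
  also have "\<dots> = (complex_of_real (1/4) * \<mu> (F 1) - complex_of_real (1/4) * \<mu> (F (-1)))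
      + (complex_of_real (1/4) * (\<i> * \<mu> (F \<i>)) - complex_of_real (1/4) * (\<i> * \<mu> (F (-\<i>))))"
    using FC JC
    by (simp add: mu_add[OF fd sta] mu_diff[OF fd sta] mu_scaleR_fun mu_scal[OF fd sta] CXA_add[OF fd sta]
        CXA_diff[OF fd sta] CXA_csm[OF fd sta] CXA_scaleR[OF fd sta] csm_real[OF fd, symmetric])
  finally have eq: "\<mu> (\<lambda>x. g x *\<^sub>R s) = \<dots>" .
  have "cmod (\<mu> (\<lambda>x. g x *\<^sub>R s)) \<le> (1/4) * (cmod (\<mu> (F 1)) + cmod (\<mu> (F (-1))) + cmod (\<mu> (F \<i>)) + cmod (\<mu> (F (-\<i>))))"
    unfolding eq
    by (rule order.trans[OF norm_triangle_ineq], rule order.trans[OF add_mono[OF norm_triangle_ineq4 norm_triangle_ineq4]])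
       (simp add: norm_mult algebra_simps)
  also have "\<dots> \<le> (1/4) * (2 * M * cmod (\<mu> (\<lambda>x. pol st csm s 1)) + 2 * M * cmod (\<mu> (\<lambda>x. pol st csm s (-1)))
      + 2 * M * cmod (\<mu> (\<lambda>x. pol st csm s \<i>)) + 2 * M * cmod (\<mu> (\<lambda>x. pol st csm s (-\<i>))))"
    by (intro mult_left_mono add_mono FB) auto
  also have "\<dots> = M * Ks s" unfolding Ks_def by (simp add: algebra_simps)
  finally show ?thesis .
qed

end

lemma rep_bl:
  fixes B :: "'a::real_normed_vector set"
  assumes fin: "finite B" and ind: "independent B" and sp: "\<forall>x. x \<in> span B"
    and C: "\<forall>u. (\<Sum>s\<in>B. \<bar>u s\<bar>) \<le> Cc * norm (\<Sum>s\<in>B. u s *\<^sub>R s)" and Cc0: "Cc \<ge> 0"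
  shows "bounded_linear (\<lambda>y. representation B y b)" and "\<bar>representation B y b\<bar> \<le> Cc * norm y"
proof -
  have bnd: "\<bar>representation B y b\<bar> \<le> Cc * norm y" for y
  proof (cases "b \<in> B")
    case True
    have "\<bar>representation B y b\<bar> \<le> (\<Sum>s\<in>B. \<bar>representation B y s\<bar>)"
      using True fin by (intro member_le_sum) auto
    also have "\<dots> \<le> Cc * norm (\<Sum>s\<in>B. representation B y s *\<^sub>R s)" using C by blast
    also have "(\<Sum>s\<in>B. representation B y s *\<^sub>R s) = y"
      using sum_representation_eq[OF ind sp[rule_format] fin] by simp
    finally show ?thesis .
  next
    case False
    then have "representation B y b = 0" using representation_ne_zero by blast
    then show ?thesis using Cc0 by simp
  qed
  then show "\<bar>representation B y b\<bar> \<le> Cc * norm y" .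
  show "bounded_linear (\<lambda>y. representation B y b)"
  proof (rule bounded_linear_intro[where K=Cc])
    show "representation B (x + y) b = representation B x b + representation B y b" for x y
      using representation_add[OF ind sp[rule_format] sp[rule_format], of x y] by simp
    show "representation B (r *\<^sub>R x) b = r *\<^sub>R representation B x b" for r x
      using representation_scale[OF ind sp[rule_format], of r x] by simp
    show "norm (representation B x b) \<le> norm x * Cc" for x using bnd[of x] by (simp add: mult.commute)
  qed
qed

context
  fixes X :: "'x::metric_space set"
    and csm :: "complex \<Rightarrow> 'a::real_normed_algebra_1 \<Rightarrow> 'a" and st :: "'a \<Rightarrow> 'a"
    and \<mu> :: "('x \<Rightarrow> 'a) \<Rightarrow> complex"
  assumes fd: "fd_cstar_algebra csm st" and sta: "is_state X csm st \<mu>"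
begin

lemma mu_bounded: "\<exists>K\<ge>0. \<forall>c\<in>CXA X. \<forall>M. (\<forall>x\<in>X. norm (c x) \<le> M) \<longrightarrow> cmod (\<mu> c) \<le> K * M"
proof -
  obtain B :: "'a set" where fin: "finite B" and ind: "independent B" and sp: "\<forall>x. x \<in> span B"
    using fd_basis[OF fd] by blast
  obtain Cc where Cc0: "Cc \<ge> 0" and C: "\<forall>u. (\<Sum>s\<in>B. \<bar>u s\<bar>) \<le> Cc * norm (\<Sum>s\<in>B. u s *\<^sub>R s)"
    using coord_bound[OF nrm_norm fin ind] by blast
  define K where "K = Cc * (\<Sum>b\<in>B. Ks csm st \<mu> b)"
  have K0: "K \<ge> 0" unfolding K_def using Cc0 by (intro mult_nonneg_nonneg sum_nonneg Ks_nonneg[OF fd sta])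
  show ?thesis
  proof (intro exI[of _ K] conjI ballI allI impI K0)
    fix c :: "'x \<Rightarrow> 'a" and M assume c: "c \<in> CXA X" and cM: "\<forall>x\<in>X. norm (c x) \<le> M"
    define g where "g b x = representation B (c x) b" for b x
    have gc: "continuous_on X (g b)" for b
      unfolding g_def using bounded_linear.continuous_on[OF rep_bl(1)[OF fin ind sp C Cc0, of b]] c
      unfolding CXA_def by blast
    have gM: "\<bar>g b x\<bar> \<le> Cc * M" if "x \<in> X" for b x
      unfolding g_def using rep_bl(2)[OF fin ind sp C Cc0, of "c x" b] cM that Cc0
      by (meson mult_left_mono order_trans)
    have cx: "c = (\<lambda>x. \<Sum>b\<in>B. g b x *\<^sub>R b)"
      unfolding g_def using sum_representation_eq[OF ind sp[rule_format] fin] by auto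
    have "\<mu> c = (\<Sum>b\<in>B. \<mu> (\<lambda>x. g b x *\<^sub>R b))"
      by (subst cx, rule mu_sum[OF fd sta fin]) (simp add: CXA_scaleR[OF fd sta] gc)
    then have "cmod (\<mu> c) \<le> (\<Sum>b\<in>B. cmod (\<mu> (\<lambda>x. g b x *\<^sub>R b)))" by (simp add: norm_sum)
    also have "\<dots> \<le> (\<Sum>b\<in>B. (Cc * M) * Ks csm st \<mu> b)"
      by (intro sum_mono g_bound_s[OF fd sta gc gM])
    also have "\<dots> = K * M" unfolding K_def by (simp add: sum_distrib_left algebra_simps)
    finally show "cmod (\<mu> c) \<le> K * M" .
  qed
qed

end

lemma lip_le:
  assumes N: "is_norm_on n" and fin: "lip_n X n a \<noteq> top" and x: "x \<in> X" and y: "y \<in> X"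
  shows "n (a x - a y) \<le> enn2real (lip_n X n a) * dist x y"
proof (cases "x = y")
  case True then show ?thesis by (simp add: nrm_0[OF N])
next
  case False
  then have d: "dist x y > 0" by simp
  have "ennreal (n (a x - a y) / dist x y) \<le> lip_n X n a"
    unfolding lip_n_def using x y False by (intro SUP_upper2[of "(x, y)"]) auto
  also have "\<dots> = ennreal (enn2real (lip_n X n a))" using fin by (simp add: ennreal_enn2real_if)
  finally have "n (a x - a y) / dist x y \<le> enn2real (lip_n X n a)" by (simp add: enn2real_nonneg)
  then show ?thesis using d by (simp add: pos_divide_le_eq)
qed

lemma sup_le:
  assumes fin: "supnorm X c \<noteq> top" and x: "x \<in> X"
  shows "norm (c x) \<le> enn2real (supnorm X c)"
proof -
  have "ennreal (norm (c x)) \<le> supnorm X c" unfolding supnorm_def using x by (rule SUP_upper)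
  also have "\<dots> = ennreal (enn2real (supnorm X c))" using fin by (simp add: ennreal_enn2real_if)
  finally show ?thesis by (simp add: enn2real_nonneg)
qed

lemma supnorm_leI: "(\<And>x. x \<in> X \<Longrightarrow> norm (c x) \<le> M) \<Longrightarrow> supnorm X c \<le> ennreal M"
  unfolding supnorm_def by (rule SUP_least) (simp add: ennreal_leI)

lemma lip_mono:
  assumes N: "is_norm_on n" and M: "is_norm_on m" and K0: "K \<ge> 0" and K: "\<And>v. m v \<le> K * n v"
  shows "lip_n X m a \<le> ennreal K * lip_n X n a"
  unfolding lip_n_def
proof (rule SUP_least)
  fix i assume "i \<in> {(x, y). x \<in> X \<and> y \<in> X \<and> x \<noteq> y}"
  then obtain x y where i: "i = (x, y)" and xy: "x \<in> X" "y \<in> X" "x \<noteq> y" by auto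
  have "ennreal (m (a x - a y) / dist x y) \<le> ennreal (K * (n (a x - a y) / dist x y))"
    using K[of "a x - a y"] xy by (intro ennreal_leI) (simp add: divide_right_mono)
  also have "\<dots> = ennreal K * ennreal (n (a x - a y) / dist x y)"
    using K0 nrm_nonneg[OF N] by (intro ennreal_mult) auto
  also have "\<dots> \<le> ennreal K * (SUP (x, y)\<in>{(x, y). x \<in> X \<and> y \<in> X \<and> x \<noteq> y}. ennreal (n (a x - a y) / dist x y))"
    using xy by (intro mult_left_mono SUP_upper2[of "(x, y)"]) auto
  finally show "(case i of (x, y) \<Rightarrow> ennreal (m (a x - a y) / dist x y)) \<le> \<dots>" using i by simp
qed

lemma ennreal_inf_arg:
  fixes Y L :: ennreal and s :: "'b \<Rightarrow> ennreal"
  assumes c: "c > 0" and h: "\<And>b. b \<in> S \<Longrightarrow> Y \<le> ennreal c * max L (s b)"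
  shows "Y \<le> ennreal c * max L (INF b\<in>S. s b)"
proof (cases "Y \<le> ennreal c * L")
  case True
  then show ?thesis by (rule order.trans) (intro mult_left_mono; simp)
next
  case False
  have inv: "ennreal (1/c) * (ennreal c * z) = z" for z
    using c by (simp add: ennreal_mult[symmetric] mult.assoc[symmetric])
  have "ennreal (1/c) * Y \<le> s b" if b: "b \<in> S" for b
  proof -
    have "Y \<le> ennreal c * s b"
    proof (cases "L \<le> s b")
      case True then show ?thesis using h[OF b] by (simp add: max_def)
    next
      case F: False
      then have "Y \<le> ennreal c * L" using h[OF b] by (simp add: max_def)
      then show ?thesis using False by simp
    qed
    then have "ennreal (1/c) * Y \<le> ennreal (1/c) * (ennreal c * s b)" by (rule mult_left_mono) simp
    then show ?thesis using inv by simp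
  qed
  then have "ennreal (1/c) * Y \<le> (INF b\<in>S. s b)" by (rule INF_greatest)
  then have "ennreal c * (ennreal (1/c) * Y) \<le> ennreal c * (INF b\<in>S. s b)" by (rule mult_left_mono) simp
  moreover have "ennreal c * (ennreal (1/c) * Y) = Y"
    using c by (simp add: ennreal_mult[symmetric] mult.assoc[symmetric])
  ultimately have "Y \<le> ennreal c * (INF b\<in>S. s b)" by simp
  then show ?thesis by (rule order.trans) (intro mult_left_mono; simp)
qed


context
  fixes X :: "'x::metric_space set"
    and csm :: "complex \<Rightarrow> 'a::real_normed_algebra_1 \<Rightarrow> 'a" and st :: "'a \<Rightarrow> 'a"
    and \<mu> :: "('x \<Rightarrow> 'a) \<Rightarrow> complex"
  assumes fd: "fd_cstar_algebra csm st" and sta: "is_state X csm st \<mu>" and cX: "compact X"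
begin

lemma csm1_norm: "norm (csm z 1 - csm w 1) = cmod (z - w)"
  using csm_norm[OF fd, of "z - w" 1] by (simp add: csm_diffl[OF fd])

lemma Dmu_bound:
  assumes N: "is_norm_on n"
  shows "\<exists>C1>0. \<forall>a\<in>CXA X. supnorm X (\<lambda>x. a x - csm (\<mu> a) 1)
     \<le> ennreal C1 * max (lip_n X n a) (INF b\<in>CX_scalar X csm. supnorm X (\<lambda>x. a x - b x))"
proof -
  obtain Km where Km0: "Km \<ge> 0"
    and Km: "\<forall>c\<in>CXA X. \<forall>M. (\<forall>x\<in>X. norm (c x) \<le> M) \<longrightarrow> cmod (\<mu> c) \<le> Km * M"
    using mu_bounded[OF fd sta] by blast
  obtain B :: "'a set" where fin: "finite B" and ind: "independent B" and sp: "\<forall>x. x \<in> span B"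
    using fd_basis[OF fd] by blast
  obtain Kn where Kn0: "Kn > 0" and Kn: "\<forall>v. norm v \<le> Kn * n v"
    using norm_equiv[OF fin ind sp nrm_norm N] by blast
  obtain D0 where D0: "\<forall>x\<in>X. \<forall>y\<in>X. dist x y \<le> D0"
    using compact_imp_bounded[OF cX] bounded_two_points by blast
  define D where "D = max D0 0"
  have D: "\<forall>x\<in>X. \<forall>y\<in>X. dist x y \<le> D" and DD: "D \<ge> 0" using D0 unfolding D_def by (auto intro: order_trans[OF _ max.cobounded1])
  define C1 where "C1 = 1 + 3 * Km + Km * Kn * D"
  have C1: "C1 > 0" unfolding C1_def using Km0 Kn0 DD by (simp add: add_pos_nonneg)
  show ?thesis
  proof (intro exI[of _ C1] conjI ballI C1)
    fix a :: "'x \<Rightarrow> 'a" assume a: "a \<in> CXA X"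
    show "supnorm X (\<lambda>x. a x - csm (\<mu> a) 1)
     \<le> ennreal C1 * max (lip_n X n a) (INF b\<in>CX_scalar X csm. supnorm X (\<lambda>x. a x - b x))"
    proof (rule ennreal_inf_arg[OF C1])
      fix b assume bS: "b \<in> CX_scalar X csm"
      then have b: "b \<in> CXA X" and bx: "\<forall>x\<in>X. b x \<in> range (\<lambda>z. csm z 1)"
        unfolding CX_scalar_def by auto
      show "supnorm X (\<lambda>x. a x - csm (\<mu> a) 1) \<le> ennreal C1 * max (lip_n X n a) (supnorm X (\<lambda>x. a x - b x))"
      proof (cases "lip_n X n a = top \<or> supnorm X (\<lambda>x. a x - b x) = top")
        case True
        then have "max (lip_n X n a) (supnorm X (\<lambda>x. a x - b x)) = top" by (auto simp: max_def top_unique)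
        then show ?thesis using C1 by (simp add: ennreal_mult_top)
      next
        case False
        define l where "l = enn2real (lip_n X n a)"
        define d where "d = enn2real (supnorm X (\<lambda>x. a x - b x))"
        have l0: "l \<ge> 0" and d0: "d \<ge> 0" unfolding l_def d_def by (auto simp: enn2real_nonneg)
        have le: "lip_n X n a = ennreal l" "supnorm X (\<lambda>x. a x - b x) = ennreal d"
          using False unfolding l_def d_def by (auto simp: ennreal_enn2real_if)
        have hA: "norm (a x - a y) \<le> Kn * l * D" if "x \<in> X" "y \<in> X" for x y
        proof -
          have "norm (a x - a y) \<le> Kn * n (a x - a y)" using Kn by blast
          also have "\<dots> \<le> Kn * (l * dist x y)"
            using lip_le[OF N _ that] False Kn0 unfolding l_def by (intro mult_left_mono) auto
          also have "\<dots> \<le> Kn * (l * D)" using D that l0 Kn0 by (intro mult_left_mono) auto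
          finally show ?thesis by (simp add: mult.assoc)
        qed
        have hB: "norm (a x - b x) \<le> d" if "x \<in> X" for x
          using sup_le[of X "\<lambda>x. a x - b x" x] False that unfolding d_def by auto
        have hmu: "cmod (\<mu> a - \<mu> b) \<le> Km * d"
        proof -
          have "\<mu> (\<lambda>y. a y - b y) = \<mu> a - \<mu> b" by (rule mu_diff[OF fd sta a b])
          moreover have "cmod (\<mu> (\<lambda>y. a y - b y)) \<le> Km * d"
            using Km[rule_format, OF CXA_diff[OF fd sta a b], of d] hB by blast
          ultimately show ?thesis by simp
        qed
        define m where "m = max l d"
        have pt: "norm (a x - csm (\<mu> a) 1) \<le> C1 * m" if x: "x \<in> X" for x
        proof -
          obtain z where z: "b x = csm z 1" using bx x by auto
          have mz: "\<mu> (\<lambda>y. csm z 1) = z" using mu_scal[OF fd sta CXA_const[OF fd sta, of 1], of z] mu_one[OF fd sta] by simp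
          have "\<mu> (\<lambda>y. b y - csm z 1) = \<mu> b - z" using mu_diff[OF fd sta b CXA_const[OF fd sta]] mz by simp
          moreover have "cmod (\<mu> (\<lambda>y. b y - csm z 1)) \<le> Km * (2 * d + Kn * l * D)"
          proof -
            have "norm (b y - csm z 1) \<le> 2 * d + Kn * l * D" if y: "y \<in> X" for y
            proof -
              have e: "b y - csm z 1 = (b y - a y) + (a y - a x) + (a x - b x)" using z by simp
              have "norm (b y - csm z 1) \<le> norm (b y - a y) + norm (a y - a x) + norm (a x - b x)"
                unfolding e using norm_triangle_ineq[of "(b y - a y) + (a y - a x)" "a x - b x"]
                  norm_triangle_ineq[of "b y - a y" "a y - a x"] by linarith
              moreover have "norm (b y - a y) \<le> d" using hB[OF y] by (simp add: norm_minus_commute)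
              ultimately show ?thesis using hA[OF y x] hB[OF x] by linarith
            qed
            then show ?thesis using Km[rule_format, OF CXA_diff[OF fd sta b CXA_const[OF fd sta, of "csm z 1"]], of "2 * d + Kn * l * D"] by blast
          qed
          ultimately have hz: "cmod (\<mu> b - z) \<le> Km * (2 * d + Kn * l * D)" by simp
          have e2: "a x - csm (\<mu> a) 1 = (a x - b x) + (csm z 1 - csm (\<mu> b) 1) + (csm (\<mu> b) 1 - csm (\<mu> a) 1)"
            using z by simp
          have "norm (a x - csm (\<mu> a) 1) \<le> norm (a x - b x) + norm (csm z 1 - csm (\<mu> b) 1) + norm (csm (\<mu> b) 1 - csm (\<mu> a) 1)"
            unfolding e2 using norm_triangle_ineq[of "(a x - b x) + (csm z 1 - csm (\<mu> b) 1)" "csm (\<mu> b) 1 - csm (\<mu> a) 1"]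
              norm_triangle_ineq[of "a x - b x" "csm z 1 - csm (\<mu> b) 1"] by linarith
          also have "\<dots> = norm (a x - b x) + cmod (\<mu> b - z) + cmod (\<mu> a - \<mu> b)"
            by (simp add: csm1_norm norm_minus_commute)
          also have "\<dots> \<le> d + Km * (2 * d + Kn * l * D) + Km * d" using hB[OF x] hz hmu by linarith
          also have "\<dots> \<le> C1 * m"
          proof -
            have dm: "d \<le> m" and lm: "l \<le> m" unfolding m_def by auto
            have "Km * d \<le> Km * m" using dm Km0 by (rule mult_left_mono)
            moreover have "(Km * Kn * D) * l \<le> (Km * Kn * D) * m" using lm Km0 Kn0 DD by (intro mult_left_mono) auto
            ultimately show ?thesis unfolding C1_def using dm by (simp add: algebra_simps)
          qed
          finally show ?thesis .
        qed
        have "supnorm X (\<lambda>x. a x - csm (\<mu> a) 1) \<le> ennreal (C1 * m)" by (rule supnorm_leI) (rule pt)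
        also have "\<dots> = ennreal C1 * ennreal m" using C1 by (intro ennreal_mult') simp
        also have "ennreal m = max (ennreal l) (ennreal d)"
          unfolding m_def using l0 d0 by (auto simp: max_def)
        finally show ?thesis unfolding le .
      qed
    qed
  qed
qed

end

definition Dq :: "'x::metric_space set \<Rightarrow> (complex \<Rightarrow> 'a::real_normed_algebra_1 \<Rightarrow> 'a)
     \<Rightarrow> (('x \<Rightarrow> 'a) \<Rightarrow> complex) \<Rightarrow> qchoice \<Rightarrow> ('x \<Rightarrow> 'a) \<Rightarrow> ennreal" where
  "Dq X csm \<mu> q a = (case q of
        Q_CX \<Rightarrow> (INF b\<in>CX_scalar X csm. supnorm X (\<lambda>x. a x - b x))
      | Q_C \<Rightarrow> (INF z. supnorm X (\<lambda>x. a x - csm z 1))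
      | Q_mu \<Rightarrow> supnorm X (\<lambda>x. a x - csm (\<mu> a) 1))"

lemma Lq_Dq: "Lq X csm \<mu> n q a = max (lip_n X n a) (Dq X csm \<mu> q a)"
  unfolding Lq_def Dq_def ..

context
  fixes X :: "'x::metric_space set"
    and csm :: "complex \<Rightarrow> 'a::real_normed_algebra_1 \<Rightarrow> 'a" and st :: "'a \<Rightarrow> 'a"
    and \<mu> :: "('x \<Rightarrow> 'a) \<Rightarrow> complex"
  assumes fd: "fd_cstar_algebra csm st" and sta: "is_state X csm st \<mu>" and cX: "compact X"
begin

lemma const_CXs: "(\<lambda>x. csm z 1) \<in> CX_scalar X csm"
  unfolding CX_scalar_def using CXA_const[OF fd sta] by auto

lemma Dq_le_Dmu: "Dq X csm \<mu> p a \<le> Dq X csm \<mu> Q_mu a"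
proof (cases p)
  case Q_CX then show ?thesis unfolding Dq_def by (auto intro: INF_lower2[OF const_CXs])
next
  case Q_C then show ?thesis unfolding Dq_def by (auto intro: INF_lower2)
next
  case Q_mu then show ?thesis by simp
qed

lemma DCX_le_Dq: "Dq X csm \<mu> Q_CX a \<le> Dq X csm \<mu> q a"
proof (cases q)
  case Q_CX then show ?thesis by simp
next
  case Q_C then show ?thesis unfolding Dq_def
    by (auto intro!: INF_mono intro: const_CXs)
next
  case Q_mu then show ?thesis unfolding Dq_def by (auto intro: INF_lower2[OF const_CXs])
qed

lemma L_upper:
  assumes N: "is_norm_on n" and M: "is_norm_on m"
  shows "\<exists>C>0. \<forall>a\<in>CXA X. Lq X csm \<mu> m p a \<le> ennreal C * Lq X csm \<mu> n q a"
proof -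
  obtain B :: "'a set" where fin: "finite B" and ind: "independent B" and sp: "\<forall>x. x \<in> span B"
    using fd_basis[OF fd] by blast
  obtain Kmn where K0: "Kmn > 0" and K: "\<forall>v. m v \<le> Kmn * n v"
    using norm_equiv[OF fin ind sp M N] by blast
  obtain C1 where C1: "C1 > 0" and C1b: "\<forall>a\<in>CXA X. supnorm X (\<lambda>x. a x - csm (\<mu> a) 1)
     \<le> ennreal C1 * max (lip_n X n a) (INF b\<in>CX_scalar X csm. supnorm X (\<lambda>x. a x - b x))"
    using Dmu_bound[OF fd sta cX N] by blast
  show ?thesis
  proof (intro exI[of _ "Kmn + C1"] conjI ballI)
    show "Kmn + C1 > 0" using K0 C1 by simp
    fix a :: "'x \<Rightarrow> 'a" assume a: "a \<in> CXA X"
    define L where "L = Lq X csm \<mu> n q a"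
    have eK: "ennreal Kmn \<le> ennreal (Kmn + C1)" and eC: "ennreal C1 \<le> ennreal (Kmn + C1)"
      using K0 C1 by (auto intro: ennreal_leI)
    have "lip_n X m a \<le> ennreal Kmn * lip_n X n a"
      using K0 K by (intro lip_mono[OF N M]) auto
    also have "\<dots> \<le> ennreal Kmn * L" unfolding L_def Lq_Dq by (intro mult_left_mono) auto
    also have "\<dots> \<le> ennreal (Kmn + C1) * L" using eK by (rule mult_right_mono) simp
    finally have h1: "lip_n X m a \<le> ennreal (Kmn + C1) * L" .
    have "Dq X csm \<mu> p a \<le> Dq X csm \<mu> Q_mu a" by (rule Dq_le_Dmu)
    also have "\<dots> \<le> ennreal C1 * max (lip_n X n a) (Dq X csm \<mu> Q_CX a)"
      using C1b a unfolding Dq_def by simp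
    also have "\<dots> \<le> ennreal C1 * L" unfolding L_def Lq_Dq
      using DCX_le_Dq[of a q] by (intro mult_left_mono) (auto simp: max_def)
    also have "\<dots> \<le> ennreal (Kmn + C1) * L" using eC by (rule mult_right_mono) simp
    finally have h2: "Dq X csm \<mu> p a \<le> ennreal (Kmn + C1) * L" .
    show "Lq X csm \<mu> m p a \<le> ennreal (Kmn + C1) * Lq X csm \<mu> n q a"
      using h1 h2 unfolding L_def by (simp add: Lq_Dq[of X csm \<mu> m p a])
  qed
qed

end

lemma cmap_eq:
  assumes fd: "fd_cstar_algebra csm st"
  shows "cmap csm (\<lambda>x. complex_of_real (f x)) = (\<lambda>x. f x *\<^sub>R (1::'a::real_normed_algebra_1))"
  unfolding cmap_def by (rule ext) (simp add: csm_real[OF fd])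

lemma lip_cmap:
  assumes N: "is_norm_on n"
  shows "lip_n X n (\<lambda>x. f x *\<^sub>R (1::'a::real_normed_algebra_1)) = ennreal (n 1) * lip_scalar X (\<lambda>x. complex_of_real (f x))"
proof -
  have pw: "ennreal (n (f x *\<^sub>R (1::'a) - f y *\<^sub>R 1) / dist x y) =
     ennreal (n 1) * ennreal (cmod (complex_of_real (f x) - complex_of_real (f y)) / dist x y)" for x y
  proof -
    have "n (f x *\<^sub>R (1::'a) - f y *\<^sub>R 1) = \<bar>f x - f y\<bar> * n 1"
      using nrm_scale[OF N, of "f x - f y" 1] by (simp add: scaleR_diff_left)
    moreover have "cmod (complex_of_real (f x) - complex_of_real (f y)) = \<bar>f x - f y\<bar>"
      by (metis norm_of_real of_real_diff)
    ultimately show ?thesis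
      using nrm_nonneg[OF N, of 1] by (simp add: ennreal_mult[symmetric] mult.commute)
  qed
  show ?thesis
    unfolding lip_n_def lip_scalar_def SUP_mult_left_ennreal
    by (rule SUP_cong[OF refl]) (auto simp: pw)
qed

theorem proposition2p15:
  fixes X :: "'x::metric_space set"
    and csm :: "complex \<Rightarrow> 'a::real_normed_algebra_1 \<Rightarrow> 'a"
    and st :: "'a \<Rightarrow> 'a"
    and \<mu> :: "('x \<Rightarrow> 'a) \<Rightarrow> complex"
    and n m :: "'a \<Rightarrow> real"
  assumes "compact X"
    and "fd_cstar_algebra csm st"
    and "is_state X csm st \<mu>"
    and "is_norm_on n" and "is_norm_on m"
  shows "(\<forall>q p. \<exists>c C. c > 0 \<and> C > 0 \<and>
            (\<forall>a\<in>CXA X. self_adjoint_fun X st a \<longrightarrow>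
               ennreal c * Lq X csm \<mu> n q a \<le> Lq X csm \<mu> m p a \<and>
               Lq X csm \<mu> m p a \<le> ennreal C * Lq X csm \<mu> n q a))
       \<and> (\<forall>q. \<exists>c' C'. c' > 0 \<and> C' > 0 \<and>
            (\<forall>f::'x \<Rightarrow> real. continuous_on X f \<longrightarrow>
               ennreal c' * lip_scalar X (\<lambda>x. complex_of_real (f x))
                 \<le> Lq X csm \<mu> n q (cmap csm (\<lambda>x. complex_of_real (f x))) \<and>
               Lq X csm \<mu> n q (cmap csm (\<lambda>x. complex_of_real (f x)))
                 \<le> ennreal C' * lip_scalar X (\<lambda>x. complex_of_real (f x))))"
proof (intro conjI allI)
  note cX = assms(1) and fd = assms(2) and sta = assms(3) and N = assms(4) and M = assms(5)
  fix q p
  obtain C where C0: "C > 0" and C: "\<forall>a\<in>CXA X. Lq X csm \<mu> m p a \<le> ennreal C * Lq X csm \<mu> n q a"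
    using L_upper[OF fd sta cX N M] by blast
  obtain C' where C'0: "C' > 0" and C': "\<forall>a\<in>CXA X. Lq X csm \<mu> n q a \<le> ennreal C' * Lq X csm \<mu> m p a"
    using L_upper[OF fd sta cX M N] by blast
  show "\<exists>c C. c > 0 \<and> C > 0 \<and>
            (\<forall>a\<in>CXA X. self_adjoint_fun X st a \<longrightarrow>
               ennreal c * Lq X csm \<mu> n q a \<le> Lq X csm \<mu> m p a \<and>
               Lq X csm \<mu> m p a \<le> ennreal C * Lq X csm \<mu> n q a)"
  proof (rule exI[of _ "1 / C'"], rule exI[of _ C], intro conjI ballI impI)
    show "1 / C' > 0" using C'0 by simp
    show "C > 0" by (rule C0)
    fix a :: "'x \<Rightarrow> 'a" assume a: "a \<in> CXA X"
    show "Lq X csm \<mu> m p a \<le> ennreal C * Lq X csm \<mu> n q a" using C a by blast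
    have "ennreal (1 / C') * Lq X csm \<mu> n q a \<le> ennreal (1 / C') * (ennreal C' * Lq X csm \<mu> m p a)"
      using C' a by (intro mult_left_mono) auto
    also have "\<dots> = Lq X csm \<mu> m p a"
      using C'0 by (simp add: ennreal_mult[symmetric] mult.assoc[symmetric])
    finally show "ennreal (1 / C') * Lq X csm \<mu> n q a \<le> Lq X csm \<mu> m p a" .
  qed
next
  note cX = assms(1) and fd = assms(2) and sta = assms(3) and N = assms(4)
  fix q
  obtain C where C0: "C > 0" and C: "\<forall>a\<in>CXA X. Lq X csm \<mu> n q a \<le> ennreal C * Lq X csm \<mu> n Q_CX a"
    using L_upper[OF fd sta cX N N] by blast
  have n1: "n 1 > 0"
    using N unfolding is_norm_on_def by (metis less_eq_real_def one_neq_zero)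
  show "\<exists>c' C'. c' > 0 \<and> C' > 0 \<and>
            (\<forall>f::'x \<Rightarrow> real. continuous_on X f \<longrightarrow>
               ennreal c' * lip_scalar X (\<lambda>x. complex_of_real (f x))
                 \<le> Lq X csm \<mu> n q (cmap csm (\<lambda>x. complex_of_real (f x))) \<and>
               Lq X csm \<mu> n q (cmap csm (\<lambda>x. complex_of_real (f x)))
                 \<le> ennreal C' * lip_scalar X (\<lambda>x. complex_of_real (f x)))"
  proof (rule exI[of _ "n 1"], rule exI[of _ "C * n 1"], intro conjI allI impI n1)
    show "C * n 1 > 0" using C0 n1 by simp
    fix f :: "'x \<Rightarrow> real" assume f: "continuous_on X f"
    define a where "a = cmap csm (\<lambda>x. complex_of_real (f x))"
    have a_eq: "a = (\<lambda>x. f x *\<^sub>R 1)" unfolding a_def by (rule cmap_eq[OF fd])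
    have aC: "a \<in> CXA X" unfolding a_eq by (rule CXA_scaleR[OF fd sta f])
    have aS: "a \<in> CX_scalar X csm"
      unfolding CX_scalar_def using aC unfolding a_def cmap_def by auto
    have lipa: "lip_n X n a = ennreal (n 1) * lip_scalar X (\<lambda>x. complex_of_real (f x))"
      unfolding a_eq by (rule lip_cmap[OF N])
    have "Dq X csm \<mu> Q_CX a \<le> supnorm X (\<lambda>x. a x - a x)"
      unfolding Dq_def qchoice.case by (rule INF_lower[OF aS])
    also have "\<dots> = 0" unfolding supnorm_def by (simp add: SUP_constant bot_ennreal)
    finally have D0: "Dq X csm \<mu> Q_CX a = 0" by simp
    have LCX: "Lq X csm \<mu> n Q_CX a = lip_n X n a" unfolding Lq_Dq D0 by simp
    show "ennreal (n 1) * lip_scalar X (\<lambda>x. complex_of_real (f x)) \<le> Lq X csm \<mu> n q a"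
      unfolding lipa[symmetric] Lq_Dq by simp
    have "Lq X csm \<mu> n q a \<le> ennreal C * (ennreal (n 1) * lip_scalar X (\<lambda>x. complex_of_real (f x)))"
      using C[rule_format, OF aC] LCX lipa by simp
    also have "\<dots> = ennreal (C * n 1) * lip_scalar X (\<lambda>x. complex_of_real (f x))"
      using C0 n1 by (simp add: ennreal_mult mult.assoc)
    finally show "Lq X csm \<mu> n q a \<le> ennreal (C * n 1) * lip_scalar X (\<lambda>x. complex_of_real (f x))" .
  qed
qed


end
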